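(* For relatively prime integers $r, s$ put $u = r^2 + s^2$, $v = 2r^2 - s^2$, and let \[ \mathcal{S} = \{\pm u(u+v),\ \pm u(u-v),\ \pm v(u+v),\ \pm v(u-v)\}. \] Then for all but finitely many pairs $(r,s)$ of relatively prime integers with $r \neq 0$, the eight elements of $\mathcal{S}$ represent eight pairwise distinct classes in $\mathbb{Q}^\times/(\mathbb{Q}^\times)^2$.
   Context: $\mathbb{Q}^\times/(\mathbb{Q}^\times)^2$ denotes the group of nonzero rationals modulo nonzero squares; two nonzero rationals represent the same class iff their quotient is a square of a rational. *)

theory Defs
  imports Complex_Main
begin

definition same_sq_class :: "rat \<Rightarrow> rat \<Rightarrow> bool" where
  "same_sq_class a b \<longleftrightarrow> a \<noteq> 0 \<and> b \<noteq> 0 \<and> (\<exists>q::rat. a / b = q ^ 2)"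

definition u_of :: "int \<Rightarrow> int \<Rightarrow> int" where
  "u_of r s = r ^ 2 + s ^ 2"

definition v_of :: "int \<Rightarrow> int \<Rightarrow> int" where
  "v_of r s = 2 * r ^ 2 - s ^ 2"

definition S_list :: "int \<Rightarrow> int \<Rightarrow> int list" where
  "S_list r s = (let u = u_of r s; v = v_of r s in
     [u * (u + v), - (u * (u + v)), u * (u - v), - (u * (u - v)),
      v * (u + v), - (v * (u + v)), v * (u - v), - (v * (u - v))])"

definition eight_distinct_classes :: "int \<Rightarrow> int \<Rightarrow> bool" where
  "eight_distinct_classes r s \<longleftrightarrow>
     (\<forall>i<8. S_list r s ! i \<noteq> 0) \<and>
     (\<forall>i<8. \<forall>j<8. i \<noteq> j \<longrightarrow>
        \<not> same_sq_class (of_int (S_list r s ! i)) (of_int (S_list r s ! j)))"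

end

theory Submission
  imports Defs "HOL-Computational_Algebra.Nth_Powers"
begin

lemma sq_mod3: fixes x :: int shows "x^2 mod 3 = (if 3 dvd x then 0 else 1)"
proof -
  have e: "x^2 mod 3 = (x mod 3)^2 mod 3" by (simp add: power_mod)
  consider "x mod 3 = 0" | "x mod 3 = 1" | "x mod 3 = 2" by linarith
  then show ?thesis unfolding e dvd_eq_mod_eq_0 by cases simp_all
qed

lemma three_dvd_sq: fixes x :: int shows "3 dvd x^2 \<longleftrightarrow> 3 dvd x"
proof (cases "3 dvd x")
  case True then show ?thesis by (simp add: power2_eq_square)
next
  case False
  then have "x^2 mod 3 = 1" using sq_mod3[of x] by simp
  then have "\<not> 3 dvd x^2" by (simp only: dvd_eq_mod_eq_0)
  then show ?thesis using False by simp
qed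

lemma three_dvd_sum_sq: fixes x y :: int assumes "3 dvd x^2 + y^2"
  shows "3 dvd x \<and> 3 dvd y"
proof -
  have z: "(x^2 + y^2) mod 3 = 0" using assms by (simp only: dvd_eq_mod_eq_0)
  have a: "x^2 mod 3 = 0 \<or> x^2 mod 3 = 1" "y^2 mod 3 = 0 \<or> y^2 mod 3 = 1"
    using sq_mod3[of x] sq_mod3[of y] by auto
  have gen: "\<And>A B::int. (A+B) mod 3 = 0 \<Longrightarrow> (A mod 3 = 0 \<or> A mod 3 = 1) \<Longrightarrow> (B mod 3 = 0 \<or> B mod 3 = 1) \<Longrightarrow> A mod 3 = 0 \<and> B mod 3 = 0"
  proof -
    fix A B :: int
    assume h: "(A+B) mod 3 = 0" and a1: "A mod 3 = 0 \<or> A mod 3 = 1" and b1: "B mod 3 = 0 \<or> B mod 3 = 1"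
    have "(A mod 3 + B mod 3) mod 3 = 0" using h by (simp add: mod_add_eq)
    then show "A mod 3 = 0 \<and> B mod 3 = 0" using a1 b1 by (elim disjE) simp_all
  qed
  have "x^2 mod 3 = 0 \<and> y^2 mod 3 = 0" using gen[OF z a] .
  then have "3 dvd x^2" "3 dvd y^2" by (simp_all only: dvd_eq_mod_eq_0)
  then show ?thesis using three_dvd_sq[of x] three_dvd_sq[of y] by simp
qed

lemma three_not_u: fixes r s :: int assumes "coprime r s" shows "\<not> 3 dvd r^2 + s^2"
proof
  assume h: "3 dvd r^2 + s^2"
  have "3 dvd r \<and> 3 dvd s" using three_dvd_sum_sq[OF h] .
  then have "is_unit (3::int)" using coprime_common_divisor[OF assms] by blast
  moreover have "\<not> is_unit (3::int)" using zdvd1_eq[of 3] by simp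
  ultimately show False by contradiction
qed

lemma sq_mod8: fixes x :: int
  shows "x^2 mod 8 = (if x mod 8 \<in> {1,3,5,7} then 1 else if x mod 8 \<in> {0,4} then 0 else 4)"
proof -
  have e: "x^2 mod 8 = (x mod 8)^2 mod 8" by (simp add: power_mod)
  consider "x mod 8 = 0" | "x mod 8 = 1" | "x mod 8 = 2" | "x mod 8 = 3" | "x mod 8 = 4"
    | "x mod 8 = 5" | "x mod 8 = 6" | "x mod 8 = 7" by linarith
  then show ?thesis unfolding e by cases simp_all
qed

lemma odd_mod8: fixes x :: int shows "odd x \<longleftrightarrow> x mod 8 \<in> {1,3,5,7}"
proof -
  have "odd x \<longleftrightarrow> (x mod 8 = 1 \<or> x mod 8 = 3 \<or> x mod 8 = 5 \<or> x mod 8 = 7)" by presburger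
  then show ?thesis by simp
qed

lemma sq8_odd: fixes x :: int shows "odd x \<Longrightarrow> x^2 mod 8 = 1"
  using sq_mod8[of x] odd_mod8[of x] by simp
lemma sq8_even: fixes x :: int shows "even x \<Longrightarrow> x^2 mod 8 = 0 \<or> x^2 mod 8 = 4"
  using sq_mod8[of x] odd_mod8[of x] by (auto split: if_splits)
lemma sq8_all: fixes x :: int shows "x^2 mod 8 = 0 \<or> x^2 mod 8 = 1 \<or> x^2 mod 8 = 4"
  using sq_mod8[of x] by (auto split: if_splits)

lemma int_sq_of_rat: fixes n :: int and q :: rat assumes "of_int n = q^2"
  shows "\<exists>k. n = k^2"
proof -
  obtain a d where qd: "quotient_of q = (a, d)" by (cases "quotient_of q")
  have q: "q = of_int a / of_int d" using quotient_of_div[OF qd] .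
  have d0: "d > 0" using quotient_of_denom_pos[OF qd] .
  have cop: "coprime a d" using quotient_of_coprime[OF qd] .
  have "(of_int n :: rat) * of_int d ^2 = of_int a ^2"
    using assms q d0 by (simp add: power_divide)
  then have eq: "n * d^2 = a^2" by (metis of_int_eq_iff of_int_mult of_int_power)
  then have "d^2 dvd a^2" by (metis dvd_triv_right)
  moreover have "coprime (d^2) (a^2)" using cop by (simp add: coprime_commute)
  ultimately have "is_unit (d^2)" by (metis coprime_common_divisor dvd_refl)
  then have "d^2 = 1" using d0 by simp
  then show ?thesis using eq by auto
qed

lemma sq_div: fixes K z c :: int assumes "c \<noteq> 0" "z^2 = K * c^2" shows "\<exists>y. K = y^2"
proof -
  have "(of_int K :: rat) = (of_int z / of_int c)^2"
    using assms by (simp add: power_divide field_simps flip: of_int_power of_int_mult) 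
  then show ?thesis by (rule int_sq_of_rat)
qed

lemma coprime_sq_int: fixes X Y z :: int
  assumes "coprime X Y" "X \<ge> 0" "Y \<ge> 0" "X * Y = z^2"
  shows "\<exists>n. X = n^2"
proof (cases "X = 0 \<or> Y = 0")
  case True
  then show ?thesis
  proof
    assume "X = 0" then show ?thesis by (intro exI[of _ 0]) simp
  next
    assume "Y = 0" then have "is_unit X" using assms(1) by simp
    then have "X = 1" using assms(2) by simp
    then show ?thesis by (intro exI[of _ 1]) simp
  qed
next
  case False
  have c: "coprime (nat X) (nat Y)" using assms by (simp add: coprime_int_iff[symmetric])
  have "nat X * nat Y = (nat \<bar>z\<bar>)^2" using assms
    by (metis nat_mult_distrib nat_power_eq abs_ge_zero power2_abs)
  then have "is_nth_power 2 (nat X * nat Y)" by auto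
  then have "is_nth_power 2 (nat X)" using is_nth_power_mult_coprime_natD(1)[OF c] False assms by auto
  then obtain y where "nat X = y^2" by (auto elim: is_nth_powerE)
  then have "X = (int y)^2" using assms(2) by (metis int_nat_eq of_nat_power)
  then show ?thesis ..
qed

lemma two_sq_aux: fixes P Q t :: int
  assumes "coprime P Q" "P > 0" "Q > 0" "t \<ge> 0" "P*Q = 2*t^2" "even P"
  shows "\<exists>p q. p \<ge> 0 \<and> q \<ge> 0 \<and> P + Q = p^2 + 2*q^2 \<and> t = p*q \<and> coprime p q"
proof -
  obtain P' where P: "P = 2*P'" using assms(6) by blast
  have e: "P'*Q = t^2" using assms(5) P by simp
  have c: "coprime P' Q" using assms(1) P by simp
  have P'0: "P' > 0" using assms(2) P by simp
  obtain q0 where q0: "P' = q0^2" using coprime_sq_int[OF c] P'0 assms e by fastforce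
  obtain p0 where p0: "Q = p0^2" using coprime_sq_int[of Q P' t] c P'0 assms e
    by (fastforce simp: coprime_commute mult.commute)
  define p where "p = \<bar>p0\<bar>"
  define q where "q = \<bar>q0\<bar>"
  have pq: "Q = p^2" "P' = q^2" "p \<ge> 0" "q \<ge> 0" using p0 q0 by (auto simp: p_def q_def)
  have "t^2 = (p*q)^2" using e pq by (simp add: power_mult_distrib mult.commute)
  then have t: "t = p*q" using pq assms(4) by simp
  have "coprime (q^2) (p^2)" using c pq by simp
  then have "coprime p q" by (simp add: coprime_commute)
  then show ?thesis using pq t P by (intro exI[of _ p] exI[of _ q]) auto
qed

lemma two_sq: fixes P Q t :: int
  assumes "coprime P Q" "P > 0" "Q > 0" "t \<ge> 0" "P*Q = 2*t^2"
  shows "\<exists>p q. p \<ge> 0 \<and> q \<ge> 0 \<and> P + Q = p^2 + 2*q^2 \<and> t = p*q \<and> coprime p q"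
proof -
  have "even (P*Q)" using assms(5) by simp
  then consider "even P" | "even Q" by auto
  then show ?thesis
  proof cases
    case 1 then show ?thesis using two_sq_aux assms by blast
  next
    case 2
    have "\<exists>p q. p \<ge> 0 \<and> q \<ge> 0 \<and> Q + P = p^2 + 2*q^2 \<and> t = p*q \<and> coprime p q"
      using two_sq_aux[of Q P t] 2 assms by (simp add: coprime_commute mult.commute)
    then show ?thesis by (simp add: add.commute)
  qed
qed

lemma pyth: fixes r s a :: int
  assumes cop: "coprime r s" and r0: "r > 0" and s0: "s > 0" and a0: "a \<ge> 0"
    and er: "even r" and os: "odd s" and eq: "r^2 + s^2 = a^2"
  shows "\<exists>m n. m \<ge> 0 \<and> n \<ge> 0 \<and> a = m^2 + n^2 \<and> s = m^2 - n^2 \<and> r = 2*m*n \<and> coprime m n"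
proof -
  have "odd (r^2 + s^2)" using er os by simp
  then have "odd (a^2)" using eq by simp
  then have oa: "odd a" by simp
  have "r^2 > 0" using r0 by simp
  then have "s^2 < a^2" using eq by linarith
  then have as: "s < a" using a0 by (rule power2_less_imp_less)
  have "even (a - s)" "even (a + s)" using oa os by auto
  then obtain X Y where X: "a - s = 2*X" and Y: "a + s = 2*Y" by (meson dvdE)
  obtain t where t: "r = 2*t" using er by blast
  have t0: "t > 0" using r0 t by simp
  have "(a - s)*(a+s) = r^2" using eq by (simp add: algebra_simps power2_eq_square)
  then have "(2*X)*(2*Y) = (2*t)^2" using X Y t by simp
  then have XY: "X*Y = t^2" by (simp add: power_mult_distrib algebra_simps)
  have X0: "X > 0" using X as by simp
  have Y0: "Y > 0" using Y as s0 by simp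
  have cop2: "coprime (r^2) s" using cop by simp
  have aXY: "a = X + Y" "s = Y - X" using X Y by linarith+
  have cXY: "coprime X Y"
  proof (rule coprimeI)
    fix c assume cX: "c dvd X" and cY: "c dvd Y"
    have ca: "c dvd a" using cX cY aXY by simp
    have cs: "c dvd s" using cX cY aXY by simp
    have "c dvd a*a - s*s" using ca cs by simp
    moreover have "a*a - s*s = r^2" using eq by (simp add: power2_eq_square algebra_simps)
    ultimately have "c dvd r^2" by simp
    then show "is_unit c" using cs coprime_common_divisor[OF cop2] by blast
  qed
  obtain n0 where n0: "X = n0^2" using coprime_sq_int[OF cXY] X0 Y0 XY by fastforce
  obtain m0 where m0: "Y = m0^2" using coprime_sq_int[of Y X t] cXY X0 Y0 XY
    by (fastforce simp: coprime_commute mult.commute)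
  define m where "m = \<bar>m0\<bar>"
  define n where "n = \<bar>n0\<bar>"
  have mn: "Y = m^2" "X = n^2" "m \<ge> 0" "n \<ge> 0" using m0 n0 by (auto simp: m_def n_def)
  have "t^2 = (m*n)^2" using XY mn by (simp add: power_mult_distrib mult.commute)
  then have "t = m*n" using mn t0 by simp
  then have rr: "r = 2*m*n" using t by simp
  have "coprime (n^2) (m^2)" using cXY mn by simp
  then have "coprime m n" by (simp add: coprime_commute)
  then show ?thesis using mn rr aXY by (intro exI[of _ m] exI[of _ n]) auto
qed


lemma parity: fixes r s a b :: int
  assumes cop: "coprime r s" and eq1: "r^2+s^2=a^2" and eq2: "s^2-2*r^2=b^2"
  shows "even r \<and> odd s"
proof -
  have n1: "\<not> (odd r \<and> odd s)"
  proof
    assume h: "odd r \<and> odd s"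
    have "(r^2 + s^2) mod 8 = (r^2 mod 8 + s^2 mod 8) mod 8" by (rule mod_add_eq[symmetric])
    then have "a^2 mod 8 = 2" using h sq8_odd eq1 by simp
    then show False using sq8_all[of a] by simp
  qed
  have n2: "\<not> (odd r \<and> even s)"
  proof
    assume h: "odd r \<and> even s"
    have e1: "(s^2 - 2*r^2) mod 8 = (s^2 mod 8 - (2*r^2) mod 8) mod 8" by (rule mod_diff_eq[symmetric])
    have e2: "(2*r^2) mod 8 = (2*(r^2 mod 8)) mod 8" by (rule mod_mult_right_eq[symmetric])
    have "r^2 mod 8 = 1" using h sq8_odd by simp
    then have e3: "b^2 mod 8 = (s^2 mod 8 - 2) mod 8" using e1 e2 eq2 by simp
    from h have "s^2 mod 8 = 0 \<or> s^2 mod 8 = 4" using sq8_even by simp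
    then have "b^2 mod 8 = 6 \<or> b^2 mod 8 = 2" using e3 by auto
    then show False using sq8_all[of b] by auto
  qed
  have n3: "\<not> (even r \<and> even s)"
  proof
    assume "even r \<and> even s"
    then have "is_unit (2::int)" using coprime_common_divisor[OF cop] by blast
    then show False by simp
  qed
  show ?thesis using n1 n2 n3 by blast
qed

lemma descent_step:
  fixes r s a b :: int
  assumes IH: "\<And>r' s' a' b'. 0 < r' \<Longrightarrow> r' < r \<Longrightarrow> coprime r' s' \<Longrightarrow> r'^2+s'^2 = a'^2 \<Longrightarrow> s'^2 - 2*r'^2 = b'^2 \<Longrightarrow> False"
    and r0: "r > 0" and s0: "s \<ge> 0" and a0: "a \<ge> 0" and b0: "b \<ge> 0" and cop: "coprime r s"
    and eq1: "r^2+s^2=a^2" and eq2: "s^2-2*r^2=b^2"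
  shows False
proof -
  have er: "even r" and os: "odd s" using parity[OF cop eq1 eq2] by auto
  have s0': "s > 0" using s0 os by (cases "s = 0") auto
  obtain m n where mn: "m \<ge> 0" "n \<ge> 0" "a = m^2 + n^2" "s = m^2 - n^2" "r = 2*m*n" "coprime m n"
    using pyth[OF cop r0 s0' a0 er os eq1] by blast
  have "odd (s^2 - 2*r^2)" using os by simp
  then have ob: "odd b" using eq2 by simp
  have "r^2 > 0" using r0 by simp
  then have "b^2 < s^2" using eq2 by linarith
  then have bs: "b < s" using s0 by (rule power2_less_imp_less)
  have "even (s - b)" "even (s + b)" using ob os by auto
  then obtain P Q where P: "s - b = 2*P" and Q: "s + b = 2*Q" by (meson dvdE)
  obtain t where t: "r = 2*t" using er by blast
  have "(s - b)*(s+b) = 2*r^2" using eq2 by (simp add: algebra_simps power2_eq_square)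
  then have "(2*P)*(2*Q) = 2*(2*t)^2" using P Q t by simp
  then have PQ: "P*Q = 2*t^2" by (simp add: power_mult_distrib algebra_simps)
  have P0: "P > 0" using P bs by simp
  have Q0: "Q > 0" using Q s0' b0 by simp
  have t0: "t > 0" using r0 t by simp
  have sPQ: "s = P + Q" "b = Q - P" using P Q by linarith+
  have cop2: "coprime (2*r^2) s" using cop os by simp
  have cPQ: "coprime P Q"
  proof (rule coprimeI)
    fix c assume cP: "c dvd P" and cQ: "c dvd Q"
    have cs: "c dvd s" using cP cQ sPQ by simp
    have cb: "c dvd b" using cP cQ sPQ by simp
    have "c dvd s*s - b*b" using cs cb by simp
    moreover have "s*s - b*b = 2*r^2" using eq2 by (simp add: power2_eq_square algebra_simps)
    ultimately have "c dvd 2*r^2" by simp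
    then show "is_unit c" using cs coprime_common_divisor[OF cop2] by blast
  qed
  obtain p q where pq: "p \<ge> 0" "q \<ge> 0" "P + Q = p^2 + 2*q^2" "t = p*q" "coprime p q"
    using two_sq[OF cPQ P0 Q0 _ PQ] t0 by auto
  have tmn: "t = m*n" using t mn(5) by simp
  have m0: "m > 0" and n0: "n > 0" using tmn t0 mn(1,2) by (auto simp: zero_less_mult_iff)
  have p0: "p > 0" and q0: "q > 0" using pq(4) t0 pq(1,2) by (auto simp: zero_less_mult_iff)
  have H1: "m^2 - n^2 = p^2 + 2*q^2" using mn(4) sPQ pq(3) by simp
  have H2: "m*n = p*q" using tmn pq(4) by simp
  define \<alpha> where "\<alpha> = gcd m p"
  define \<beta> where "\<beta> = m div \<alpha>"
  define \<gamma> where "\<gamma> = p div \<alpha>"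
  have \<alpha>0: "\<alpha> > 0" using m0 by (simp add: \<alpha>_def)
  have m_eq: "m = \<alpha> * \<beta>" by (simp add: \<alpha>_def \<beta>_def)
  have p_eq: "p = \<alpha> * \<gamma>" by (simp add: \<alpha>_def \<gamma>_def)
  have cbg: "coprime \<beta> \<gamma>" unfolding \<beta>_def \<gamma>_def \<alpha>_def using m0 by (intro div_gcd_coprime) simp
  have "\<alpha> * (\<beta> * n) = \<alpha> * (\<gamma> * q)" using H2 m_eq p_eq by (simp add: algebra_simps)
  then have bn: "\<beta> * n = \<gamma> * q" using \<alpha>0 by simp
  have "\<gamma> dvd \<beta> * n" using bn by simp
  then have "\<gamma> dvd n" using cbg by (simp add: coprime_dvd_mult_right_iff coprime_commute)
  then obtain \<delta> where n_eq: "n = \<gamma> * \<delta>" by blast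
  have \<beta>0: "\<beta> > 0" using m0 m_eq \<alpha>0 by (simp add: zero_less_mult_iff)
  have \<gamma>0: "\<gamma> > 0" using p0 p_eq \<alpha>0 by (simp add: zero_less_mult_iff)
  have \<delta>0: "\<delta> > 0" using n0 n_eq \<gamma>0 by (simp add: zero_less_mult_iff)
  have "\<gamma> * (\<beta> * \<delta>) = \<gamma> * q" using bn n_eq by (simp add: algebra_simps)
  then have q_eq: "q = \<beta> * \<delta>" using \<gamma>0 by simp
  have H3: "(\<alpha>*\<beta>)^2 - (\<gamma>*\<delta>)^2 = (\<alpha>*\<gamma>)^2 + 2*(\<beta>*\<delta>)^2"
    using H1 m_eq n_eq p_eq q_eq by simp
  have E: "\<alpha>^2 * (\<beta>^2 - \<gamma>^2) = (\<gamma>^2 + 2*\<beta>^2) * \<delta>^2"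
    using H3 by algebra
  have cad: "coprime \<alpha> \<delta>"
  proof (rule coprimeI)
    fix c assume "c dvd \<alpha>" "c dvd \<delta>"
    then have "c dvd m" "c dvd n" using m_eq n_eq by auto
    then show "is_unit c" using coprime_common_divisor[OF mn(6)] by blast
  qed
  have "\<alpha>^2 dvd (\<gamma>^2 + 2*\<beta>^2) * \<delta>^2" using E by (metis dvd_triv_left)
  moreover have "coprime (\<alpha>^2) (\<delta>^2)" using cad by simp
  ultimately have "\<alpha>^2 dvd \<gamma>^2 + 2*\<beta>^2" by (simp add: coprime_dvd_mult_left_iff)
  then obtain k where k: "\<gamma>^2 + 2*\<beta>^2 = \<alpha>^2 * k" by blast
  have "\<alpha>^2 * (\<beta>^2 - \<gamma>^2) = \<alpha>^2 * (\<delta>^2 * k)" using E k by (simp add: algebra_simps)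
  then have k2: "\<beta>^2 - \<gamma>^2 = \<delta>^2 * k" using \<alpha>0 by simp
  have "\<alpha>^2 * k > 0" using k[symmetric] \<beta>0 by (simp add: add_nonneg_pos)
  then have k0: "k > 0" using \<alpha>0 by (simp add: zero_less_mult_iff)
  have d1: "3*\<beta>^2 = k*(\<alpha>^2 + \<delta>^2)" using k k2 by algebra
  have d2: "3*\<gamma>^2 = k*(\<alpha>^2 - 2*\<delta>^2)" using k k2 by algebra
  have "k dvd 3*\<beta>^2" "k dvd 3*\<gamma>^2" using d1 d2 by simp_all
  then have "k dvd gcd (3*\<beta>^2) (3*\<gamma>^2)" by simp
  moreover have "gcd (3*\<beta>^2) (3*\<gamma>^2) = 3"
  proof -
    have "coprime (\<beta>^2) (\<gamma>^2)" using cbg by simp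
    then have "gcd (\<beta>^2) (\<gamma>^2) = 1" by simp
    then show ?thesis by (simp add: gcd_mult_left)
  qed
  ultimately have "k dvd 3" by simp
  then have "k \<le> 3" by (simp add: zdvd_imp_le)
  then have "k = 1 \<or> k = 2 \<or> k = 3" using k0 by linarith
  then have "k = 1 \<or> k = 3" using \<open>k dvd 3\<close> by auto
  then show False
  proof
    assume "k = 1"
    then have "3 dvd \<alpha>^2 + \<delta>^2" using d1 by (metis dvd_triv_left mult_1)
    then have "3 dvd \<alpha> \<and> 3 dvd \<delta>" by (rule three_dvd_sum_sq)
    then have "is_unit (3::int)" using coprime_common_divisor[OF cad] by blast
    then show False using zdvd1_eq[of 3] by simp
  next
    assume k3: "k = 3"
    have e1: "\<delta>^2 + \<alpha>^2 = \<beta>^2" using d1 k3 by simp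
    have e2: "\<alpha>^2 - 2*\<delta>^2 = \<gamma>^2" using d2 k3 by simp
    have "0 < \<alpha>*\<beta>*\<gamma>" using \<alpha>0 \<beta>0 \<gamma>0 by simp
    then have "1 \<le> \<alpha>*\<beta>*\<gamma>" by linarith
    then have "\<delta> * 1 \<le> \<delta> * (\<alpha>*\<beta>*\<gamma>)" using \<delta>0 by (intro mult_left_mono) auto
    moreover have "r = 2 * (\<delta> * (\<alpha>*\<beta>*\<gamma>))" using mn(5) m_eq n_eq by (simp add: algebra_simps)
    ultimately have "\<delta> < r" using \<delta>0 by linarith
    moreover have "coprime \<delta> \<alpha>" using cad by (simp add: coprime_commute)
    ultimately show False using IH[OF \<delta>0 _ _ e1 e2] by blast
  qed
qed

lemma nsq_rule: fixes x y K c :: int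
  assumes "x*y = K*c^2" "c \<noteq> 0" "\<And>z. K \<noteq> z^2"
  shows "\<not> same_sq_class (of_int x) (of_int y)"
proof
  assume "same_sq_class (of_int x) (of_int y)"
  then obtain q :: rat where y0: "(of_int y :: rat) \<noteq> 0" and q: "of_int x / of_int y = q^2"
    unfolding same_sq_class_def by blast
  have "(of_int x :: rat) = q^2 * of_int y" using q y0 by (simp add: field_simps)
  then have "(of_int (x*y) :: rat) = (q * of_int y)^2" by (simp add: power2_eq_square)
  then have "(of_int K :: rat) * (of_int c)^2 = (q * of_int y)^2" using assms(1) by (metis of_int_mult of_int_power)
  then have "(of_int K :: rat) = (q * of_int y)^2 / (of_int c)^2" using assms(2) by (simp add: eq_divide_eq)
  then have "(of_int K :: rat) = (q * of_int y / of_int c)^2" by (simp only: power_divide)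
  then obtain z where "K = z^2" using int_sq_of_rat by blast
  then show False using assms(3) by blast
qed

lemma all8: "(\<forall>i<(8::nat). P i) \<longleftrightarrow> P 0 \<and> P 1 \<and> P 2 \<and> P 3 \<and> P 4 \<and> P 5 \<and> P 6 \<and> P 7"
proof -
  have "(\<forall>i<(8::nat). P i) \<longleftrightarrow> (\<forall>i\<in>{..<8}. P i)" by blast
  also have "{..<(8::nat)} = {0,1,2,3,4,5,6,7}" by (simp add: lessThan_nat_numeral lessThan_Suc insert_commute)
  finally show ?thesis by (simp add: conj_ac)
qed

lemma eight_from_uv:
  fixes u v r s :: int
  assumes U: "u_of r s = u" and V: "v_of r s = v"
    and nz: "u \<noteq> 0" "v \<noteq> 0" "u + v \<noteq> 0" "u - v \<noteq> 0"
    and ns: "\<And>z::int. -1 \<noteq> z^2" "\<And>z. u*v \<noteq> z^2" "\<And>z. -(u*v) \<noteq> z^2"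
      "\<And>z. ((u+v)*(u-v)) \<noteq> z^2" "\<And>z. -((u+v)*(u-v)) \<noteq> z^2"
      "\<And>z. u*v*((u+v)*(u-v)) \<noteq> z^2" "\<And>z. -(u*v*((u+v)*(u-v))) \<noteq> z^2"
  shows "eight_distinct_classes r s"
proof -
  have h01: "\<not> same_sq_class (of_int (u * (u+v))) (of_int (- (u * (u+v))))"
    by (rule nsq_rule[where K="-1" and c="u*(u+v)"], simp add: power2_eq_square algebra_simps, use nz in simp, rule ns(1))
  have h02: "\<not> same_sq_class (of_int (u * (u+v))) (of_int (u * (u-v)))"
    by (rule nsq_rule[where K="((u+v)*(u-v))" and c="u"], simp add: power2_eq_square algebra_simps, use nz in simp, rule ns(4))
  have h03: "\<not> same_sq_class (of_int (u * (u+v))) (of_int (- (u * (u-v))))"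
    by (rule nsq_rule[where K="-(((u+v)*(u-v)))" and c="u"], simp add: power2_eq_square algebra_simps, use nz in simp, rule ns(5))
  have h04: "\<not> same_sq_class (of_int (u * (u+v))) (of_int (v * (u+v)))"
    by (rule nsq_rule[where K="u*v" and c="(u+v)"], simp add: power2_eq_square algebra_simps, use nz in simp, rule ns(2))
  have h05: "\<not> same_sq_class (of_int (u * (u+v))) (of_int (- (v * (u+v))))"
    by (rule nsq_rule[where K="-(u*v)" and c="(u+v)"], simp add: power2_eq_square algebra_simps, use nz in simp, rule ns(3))
  have h06: "\<not> same_sq_class (of_int (u * (u+v))) (of_int (v * (u-v)))"
    by (rule nsq_rule[where K="u*v*((u+v)*(u-v))" and c="1"], simp add: power2_eq_square algebra_simps, use nz in simp, rule ns(6))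
  have h07: "\<not> same_sq_class (of_int (u * (u+v))) (of_int (- (v * (u-v))))"
    by (rule nsq_rule[where K="-(u*v*((u+v)*(u-v)))" and c="1"], simp add: power2_eq_square algebra_simps, use nz in simp, rule ns(7))
  have h10: "\<not> same_sq_class (of_int (- (u * (u+v)))) (of_int (u * (u+v)))"
    by (rule nsq_rule[where K="-1" and c="u*(u+v)"], simp add: power2_eq_square algebra_simps, use nz in simp, rule ns(1))
  have h12: "\<not> same_sq_class (of_int (- (u * (u+v)))) (of_int (u * (u-v)))"
    by (rule nsq_rule[where K="-(((u+v)*(u-v)))" and c="u"], simp add: power2_eq_square algebra_simps, use nz in simp, rule ns(5))
  have h13: "\<not> same_sq_class (of_int (- (u * (u+v)))) (of_int (- (u * (u-v))))"
    by (rule nsq_rule[where K="((u+v)*(u-v))" and c="u"], simp add: power2_eq_square algebra_simps, use nz in simp, rule ns(4))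
  have h14: "\<not> same_sq_class (of_int (- (u * (u+v)))) (of_int (v * (u+v)))"
    by (rule nsq_rule[where K="-(u*v)" and c="(u+v)"], simp add: power2_eq_square algebra_simps, use nz in simp, rule ns(3))
  have h15: "\<not> same_sq_class (of_int (- (u * (u+v)))) (of_int (- (v * (u+v))))"
    by (rule nsq_rule[where K="u*v" and c="(u+v)"], simp add: power2_eq_square algebra_simps, use nz in simp, rule ns(2))
  have h16: "\<not> same_sq_class (of_int (- (u * (u+v)))) (of_int (v * (u-v)))"
    by (rule nsq_rule[where K="-(u*v*((u+v)*(u-v)))" and c="1"], simp add: power2_eq_square algebra_simps, use nz in simp, rule ns(7))
  have h17: "\<not> same_sq_class (of_int (- (u * (u+v)))) (of_int (- (v * (u-v))))"
    by (rule nsq_rule[where K="u*v*((u+v)*(u-v))" and c="1"], simp add: power2_eq_square algebra_simps, use nz in simp, rule ns(6))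
  have h20: "\<not> same_sq_class (of_int (u * (u-v))) (of_int (u * (u+v)))"
    by (rule nsq_rule[where K="((u+v)*(u-v))" and c="u"], simp add: power2_eq_square algebra_simps, use nz in simp, rule ns(4))
  have h21: "\<not> same_sq_class (of_int (u * (u-v))) (of_int (- (u * (u+v))))"
    by (rule nsq_rule[where K="-(((u+v)*(u-v)))" and c="u"], simp add: power2_eq_square algebra_simps, use nz in simp, rule ns(5))
  have h23: "\<not> same_sq_class (of_int (u * (u-v))) (of_int (- (u * (u-v))))"
    by (rule nsq_rule[where K="-1" and c="u*(u-v)"], simp add: power2_eq_square algebra_simps, use nz in simp, rule ns(1))
  have h24: "\<not> same_sq_class (of_int (u * (u-v))) (of_int (v * (u+v)))"
    by (rule nsq_rule[where K="u*v*((u+v)*(u-v))" and c="1"], simp add: power2_eq_square algebra_simps, use nz in simp, rule ns(6))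
  have h25: "\<not> same_sq_class (of_int (u * (u-v))) (of_int (- (v * (u+v))))"
    by (rule nsq_rule[where K="-(u*v*((u+v)*(u-v)))" and c="1"], simp add: power2_eq_square algebra_simps, use nz in simp, rule ns(7))
  have h26: "\<not> same_sq_class (of_int (u * (u-v))) (of_int (v * (u-v)))"
    by (rule nsq_rule[where K="u*v" and c="(u-v)"], simp add: power2_eq_square algebra_simps, use nz in simp, rule ns(2))
  have h27: "\<not> same_sq_class (of_int (u * (u-v))) (of_int (- (v * (u-v))))"
    by (rule nsq_rule[where K="-(u*v)" and c="(u-v)"], simp add: power2_eq_square algebra_simps, use nz in simp, rule ns(3))
  have h30: "\<not> same_sq_class (of_int (- (u * (u-v)))) (of_int (u * (u+v)))"
    by (rule nsq_rule[where K="-(((u+v)*(u-v)))" and c="u"], simp add: power2_eq_square algebra_simps, use nz in simp, rule ns(5))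
  have h31: "\<not> same_sq_class (of_int (- (u * (u-v)))) (of_int (- (u * (u+v))))"
    by (rule nsq_rule[where K="((u+v)*(u-v))" and c="u"], simp add: power2_eq_square algebra_simps, use nz in simp, rule ns(4))
  have h32: "\<not> same_sq_class (of_int (- (u * (u-v)))) (of_int (u * (u-v)))"
    by (rule nsq_rule[where K="-1" and c="u*(u-v)"], simp add: power2_eq_square algebra_simps, use nz in simp, rule ns(1))
  have h34: "\<not> same_sq_class (of_int (- (u * (u-v)))) (of_int (v * (u+v)))"
    by (rule nsq_rule[where K="-(u*v*((u+v)*(u-v)))" and c="1"], simp add: power2_eq_square algebra_simps, use nz in simp, rule ns(7))
  have h35: "\<not> same_sq_class (of_int (- (u * (u-v)))) (of_int (- (v * (u+v))))"
    by (rule nsq_rule[where K="u*v*((u+v)*(u-v))" and c="1"], simp add: power2_eq_square algebra_simps, use nz in simp, rule ns(6))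
  have h36: "\<not> same_sq_class (of_int (- (u * (u-v)))) (of_int (v * (u-v)))"
    by (rule nsq_rule[where K="-(u*v)" and c="(u-v)"], simp add: power2_eq_square algebra_simps, use nz in simp, rule ns(3))
  have h37: "\<not> same_sq_class (of_int (- (u * (u-v)))) (of_int (- (v * (u-v))))"
    by (rule nsq_rule[where K="u*v" and c="(u-v)"], simp add: power2_eq_square algebra_simps, use nz in simp, rule ns(2))
  have h40: "\<not> same_sq_class (of_int (v * (u+v))) (of_int (u * (u+v)))"
    by (rule nsq_rule[where K="u*v" and c="(u+v)"], simp add: power2_eq_square algebra_simps, use nz in simp, rule ns(2))
  have h41: "\<not> same_sq_class (of_int (v * (u+v))) (of_int (- (u * (u+v))))"
    by (rule nsq_rule[where K="-(u*v)" and c="(u+v)"], simp add: power2_eq_square algebra_simps, use nz in simp, rule ns(3))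
  have h42: "\<not> same_sq_class (of_int (v * (u+v))) (of_int (u * (u-v)))"
    by (rule nsq_rule[where K="u*v*((u+v)*(u-v))" and c="1"], simp add: power2_eq_square algebra_simps, use nz in simp, rule ns(6))
  have h43: "\<not> same_sq_class (of_int (v * (u+v))) (of_int (- (u * (u-v))))"
    by (rule nsq_rule[where K="-(u*v*((u+v)*(u-v)))" and c="1"], simp add: power2_eq_square algebra_simps, use nz in simp, rule ns(7))
  have h45: "\<not> same_sq_class (of_int (v * (u+v))) (of_int (- (v * (u+v))))"
    by (rule nsq_rule[where K="-1" and c="v*(u+v)"], simp add: power2_eq_square algebra_simps, use nz in simp, rule ns(1))
  have h46: "\<not> same_sq_class (of_int (v * (u+v))) (of_int (v * (u-v)))"
    by (rule nsq_rule[where K="((u+v)*(u-v))" and c="v"], simp add: power2_eq_square algebra_simps, use nz in simp, rule ns(4))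
  have h47: "\<not> same_sq_class (of_int (v * (u+v))) (of_int (- (v * (u-v))))"
    by (rule nsq_rule[where K="-(((u+v)*(u-v)))" and c="v"], simp add: power2_eq_square algebra_simps, use nz in simp, rule ns(5))
  have h50: "\<not> same_sq_class (of_int (- (v * (u+v)))) (of_int (u * (u+v)))"
    by (rule nsq_rule[where K="-(u*v)" and c="(u+v)"], simp add: power2_eq_square algebra_simps, use nz in simp, rule ns(3))
  have h51: "\<not> same_sq_class (of_int (- (v * (u+v)))) (of_int (- (u * (u+v))))"
    by (rule nsq_rule[where K="u*v" and c="(u+v)"], simp add: power2_eq_square algebra_simps, use nz in simp, rule ns(2))
  have h52: "\<not> same_sq_class (of_int (- (v * (u+v)))) (of_int (u * (u-v)))"
    by (rule nsq_rule[where K="-(u*v*((u+v)*(u-v)))" and c="1"], simp add: power2_eq_square algebra_simps, use nz in simp, rule ns(7))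
  have h53: "\<not> same_sq_class (of_int (- (v * (u+v)))) (of_int (- (u * (u-v))))"
    by (rule nsq_rule[where K="u*v*((u+v)*(u-v))" and c="1"], simp add: power2_eq_square algebra_simps, use nz in simp, rule ns(6))
  have h54: "\<not> same_sq_class (of_int (- (v * (u+v)))) (of_int (v * (u+v)))"
    by (rule nsq_rule[where K="-1" and c="v*(u+v)"], simp add: power2_eq_square algebra_simps, use nz in simp, rule ns(1))
  have h56: "\<not> same_sq_class (of_int (- (v * (u+v)))) (of_int (v * (u-v)))"
    by (rule nsq_rule[where K="-(((u+v)*(u-v)))" and c="v"], simp add: power2_eq_square algebra_simps, use nz in simp, rule ns(5))
  have h57: "\<not> same_sq_class (of_int (- (v * (u+v)))) (of_int (- (v * (u-v))))"
    by (rule nsq_rule[where K="((u+v)*(u-v))" and c="v"], simp add: power2_eq_square algebra_simps, use nz in simp, rule ns(4))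
  have h60: "\<not> same_sq_class (of_int (v * (u-v))) (of_int (u * (u+v)))"
    by (rule nsq_rule[where K="u*v*((u+v)*(u-v))" and c="1"], simp add: power2_eq_square algebra_simps, use nz in simp, rule ns(6))
  have h61: "\<not> same_sq_class (of_int (v * (u-v))) (of_int (- (u * (u+v))))"
    by (rule nsq_rule[where K="-(u*v*((u+v)*(u-v)))" and c="1"], simp add: power2_eq_square algebra_simps, use nz in simp, rule ns(7))
  have h62: "\<not> same_sq_class (of_int (v * (u-v))) (of_int (u * (u-v)))"
    by (rule nsq_rule[where K="u*v" and c="(u-v)"], simp add: power2_eq_square algebra_simps, use nz in simp, rule ns(2))
  have h63: "\<not> same_sq_class (of_int (v * (u-v))) (of_int (- (u * (u-v))))"
    by (rule nsq_rule[where K="-(u*v)" and c="(u-v)"], simp add: power2_eq_square algebra_simps, use nz in simp, rule ns(3))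
  have h64: "\<not> same_sq_class (of_int (v * (u-v))) (of_int (v * (u+v)))"
    by (rule nsq_rule[where K="((u+v)*(u-v))" and c="v"], simp add: power2_eq_square algebra_simps, use nz in simp, rule ns(4))
  have h65: "\<not> same_sq_class (of_int (v * (u-v))) (of_int (- (v * (u+v))))"
    by (rule nsq_rule[where K="-(((u+v)*(u-v)))" and c="v"], simp add: power2_eq_square algebra_simps, use nz in simp, rule ns(5))
  have h67: "\<not> same_sq_class (of_int (v * (u-v))) (of_int (- (v * (u-v))))"
    by (rule nsq_rule[where K="-1" and c="v*(u-v)"], simp add: power2_eq_square algebra_simps, use nz in simp, rule ns(1))
  have h70: "\<not> same_sq_class (of_int (- (v * (u-v)))) (of_int (u * (u+v)))"
    by (rule nsq_rule[where K="-(u*v*((u+v)*(u-v)))" and c="1"], simp add: power2_eq_square algebra_simps, use nz in simp, rule ns(7))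
  have h71: "\<not> same_sq_class (of_int (- (v * (u-v)))) (of_int (- (u * (u+v))))"
    by (rule nsq_rule[where K="u*v*((u+v)*(u-v))" and c="1"], simp add: power2_eq_square algebra_simps, use nz in simp, rule ns(6))
  have h72: "\<not> same_sq_class (of_int (- (v * (u-v)))) (of_int (u * (u-v)))"
    by (rule nsq_rule[where K="-(u*v)" and c="(u-v)"], simp add: power2_eq_square algebra_simps, use nz in simp, rule ns(3))
  have h73: "\<not> same_sq_class (of_int (- (v * (u-v)))) (of_int (- (u * (u-v))))"
    by (rule nsq_rule[where K="u*v" and c="(u-v)"], simp add: power2_eq_square algebra_simps, use nz in simp, rule ns(2))
  have h74: "\<not> same_sq_class (of_int (- (v * (u-v)))) (of_int (v * (u+v)))"
    by (rule nsq_rule[where K="-(((u+v)*(u-v)))" and c="v"], simp add: power2_eq_square algebra_simps, use nz in simp, rule ns(5))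
  have h75: "\<not> same_sq_class (of_int (- (v * (u-v)))) (of_int (- (v * (u+v))))"
    by (rule nsq_rule[where K="((u+v)*(u-v))" and c="v"], simp add: power2_eq_square algebra_simps, use nz in simp, rule ns(4))
  have h76: "\<not> same_sq_class (of_int (- (v * (u-v)))) (of_int (v * (u-v)))"
    by (rule nsq_rule[where K="-1" and c="v*(u-v)"], simp add: power2_eq_square algebra_simps, use nz in simp, rule ns(1))
  show ?thesis
    unfolding eight_distinct_classes_def S_list_def Let_def U V all8
    using nz h01 h02 h03 h04 h05 h06 h07 h10 h12 h13 h14 h15 h16 h17 h20 h21 h23 h24 h25 h26 h27 h30 h31 h32 h34 h35 h36 h37 h40 h41 h42 h43 h45 h46 h47 h50 h51 h52 h53 h54 h56 h57 h60 h61 h62 h63 h64 h65 h67 h70 h71 h72 h73 h74 h75 h76 by simp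
qed


lemma no_sol_pos: fixes N :: nat
  shows "\<And>r s a b :: int. r = int N \<Longrightarrow> 0 < r \<Longrightarrow> coprime r s \<Longrightarrow> r^2+s^2=a^2 \<Longrightarrow> s^2-2*r^2=b^2 \<Longrightarrow> False"
proof (induction N rule: less_induct)
  case (less N r s a b)
  show False
  proof (rule descent_step[of r "\<bar>s\<bar>" "\<bar>a\<bar>" "\<bar>b\<bar>"])
    fix r' s' a' b' :: int
    assume h: "0 < r'" "r' < r" "coprime r' s'" "r'^2+s'^2 = a'^2" "s'^2 - 2*r'^2 = b'^2"
    have "nat r' < N" using h(1,2) less.prems(1) by simp
    then show False using less.IH[of "nat r'" r' s' a' b'] h by simp
  qed (use less.prems in auto)
qed

lemma no_sol: fixes r s a b :: int
  assumes "coprime r s" "r \<noteq> 0" "r^2+s^2=a^2" "s^2-2*r^2=b^2"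
  shows False
proof -
  have h: "\<bar>r\<bar> = int (nat \<bar>r\<bar>)" by simp
  show False by (rule no_sol_pos[OF h]) (use assms in auto)
qed

lemma not_2sq: fixes x y :: int assumes "x^2 = 2*y^2" "coprime x y" shows False
proof -
  have "even (x^2)" using assms(1) by simp
  then have "even x" by simp
  then obtain k where k: "x = 2*k" by blast
  then have "y^2 = 2*k^2" using assms(1) by (simp add: power_mult_distrib)
  then have "even (y^2)" by simp
  then have "even y" by simp
  then have "is_unit (2::int)" using \<open>even x\<close> coprime_common_divisor[OF assms(2)] by blast
  then show False by simp
qed

lemma three_prime: "prime (3::int)"
  by simp

lemma main_ok: fixes r s :: int assumes cop: "coprime r s" and r0: "r \<noteq> 0"
  shows "eight_distinct_classes r s"
proof -
  define u where "u = r^2 + s^2"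
  define v where "v = 2*r^2 - s^2"
  define w where "w = 2*s^2 - r^2"
  have U: "u_of r s = u" and V: "v_of r s = v" by (simp_all add: u_def v_def u_of_def v_of_def)
  have upv: "u + v = 3*r^2" and umv: "u - v = w" by (simp_all add: u_def v_def w_def)
  have r2: "r^2 > 0" using r0 by simp
  have u0: "u > 0" using r2 by (simp add: u_def add_pos_nonneg)
  have n3u: "\<not> 3 dvd u" using three_not_u[OF cop] by (simp add: u_def)
  have v0: "v \<noteq> 0"
  proof
    assume "v = 0" then have "s^2 = 2*r^2" by (simp add: v_def)
    then show False using not_2sq[of s r] cop by (simp add: coprime_commute)
  qed
  have w0: "w \<noteq> 0"
  proof
    assume "w = 0" then have "r^2 = 2*s^2" by (simp add: w_def)
    then show False using not_2sq[of r s] cop by simp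
  qed
  have uw: "u + w = 3*s^2" by (simp add: u_def w_def)
  have uv3: "u*v*((u+v)*(u-v)) = 3*(u*v*w)*r^2" using upv umv by (simp add: algebra_simps)
  have pm3: "(u+v)*(u-v) = 3*w*r^2" using upv umv by (simp add: algebra_simps)
  have n3w: "\<not> 3 dvd w"
  proof
    assume "3 dvd w"
    then have "3 dvd 3*s^2 - w" by simp
    then show False using uw n3u by (metis add_diff_cancel_right')
  qed
  have n3v: "\<not> 3 dvd v"
  proof
    assume "3 dvd v"
    then have "3 dvd 3*r^2 - v" by simp
    then show False using upv n3u by (metis add_diff_cancel_right')
  qed
  have n3uvw: "\<not> 3 dvd u*v*w"
    using n3u n3v n3w three_prime by (simp add: prime_dvd_mult_iff)
  have gen3: "\<And>X z e. \<not> 3 dvd X \<Longrightarrow> (e = 1 \<or> e = -1) \<Longrightarrow> e*(3*X*r^2) \<noteq> z^2"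
  proof
    fix X z e :: int assume nX: "\<not> 3 dvd X" and e: "e = 1 \<or> e = -1" and h: "e*(3*X*r^2) = z^2"
    have "z^2 = (e*3*X)*r^2" using h by (simp add: algebra_simps)
    then obtain y where y: "e*3*X = y^2" using sq_div r0 by blast
    then have "3 dvd y^2" by (metis dvd_triv_left mult.assoc mult.left_commute)
    then have "3 dvd y" using three_dvd_sq by simp
    then obtain y' where "y = 3*y'" by blast
    then have "e*3*X = 3*(3*y'^2)" using y by (simp add: power_mult_distrib)
    then have "e*X = 3*y'^2" by (simp add: mult.commute)
    then have "3 dvd e*X" by simp
    then have "3 dvd X" using e by auto
    then show False using nX by simp
  qed
  have coprime_uv: "coprime u v"
  proof (rule coprimeI)
    fix c assume cu: "c dvd u" and cv: "c dvd v"
    have "c dvd u + v" "c dvd 2*u - v" using cu cv by simp_all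
    moreover have "2*u - v = 3*s^2" by (simp add: u_def v_def)
    ultimately have c1: "c dvd 3*r^2" "c dvd 3*s^2" using upv by simp_all
    have "gcd (3*r^2) (3*s^2) = 3"
    proof -
      have "coprime (r^2) (s^2)" using cop by simp
      then have "gcd (r^2) (s^2) = 1" by simp
      then show ?thesis by (simp add: gcd_mult_left)
    qed
    then have c3: "c dvd 3" using c1 by (metis gcd_greatest)
    then have "\<bar>c\<bar> \<le> 3" by (simp add: zdvd_imp_le)
    moreover have "c \<noteq> 0" using c3 by auto
    moreover have "\<bar>c\<bar> \<noteq> 2"
    proof
      assume "\<bar>c\<bar> = 2" then have "c = 2 \<or> c = -2" by auto
      then show False using c3 by auto
    qed
    moreover have "\<bar>c\<bar> \<noteq> 3"
    proof
      assume "\<bar>c\<bar> = 3" then have "c = 3 \<or> c = -3" by auto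
      then show False using cu n3u by auto
    qed
    ultimately have "\<bar>c\<bar> = 1" by linarith
    then show "is_unit c" by simp
  qed
  have nsA: "u*v \<noteq> z^2" for z
  proof
    assume h: "u*v = z^2"
    have "v > 0"
    proof (rule ccontr)
      assume "\<not> v > 0" then have "v < 0" using v0 by simp
      then have "u*v < 0" using u0 by (simp add: mult_pos_neg)
      then show False using h by (metis not_square_less_zero power2_eq_square)
    qed
    obtain a where a: "u = a^2" using coprime_sq_int[OF coprime_uv] u0 \<open>v>0\<close> h by fastforce
    obtain b where b: "v = b^2" using coprime_sq_int[of v u z] coprime_uv u0 \<open>v>0\<close> h
      by (fastforce simp: coprime_commute mult.commute)
    have "3 dvd a^2 + b^2" using upv a b by (metis dvd_triv_left)
    then have "3 dvd a" using three_dvd_sum_sq by blast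
    then have "3 dvd u" using a by (simp add: power2_eq_square)
    then show False using n3u by simp
  qed
  have nsB: "-(u*v) \<noteq> z^2" for z
  proof
    assume h: "-(u*v) = z^2"
    have "v < 0"
    proof (rule ccontr)
      assume "\<not> v < 0" then have "v > 0" using v0 by simp
      then have "u*v > 0" using u0 by simp
      then show False using h by (metis neg_less_0_iff_less not_square_less_zero power2_eq_square)
    qed
    have h': "u * (-v) = z^2" using h by simp
    have cuv: "coprime u (-v)" using coprime_uv by simp
    obtain a where a: "u = a^2" using coprime_sq_int[OF cuv] u0 \<open>v<0\<close> h' by fastforce
    obtain b where b: "-v = b^2" using coprime_sq_int[of "-v" u z] cuv u0 \<open>v<0\<close> h'
      by (fastforce simp: coprime_commute mult.commute)
    have "r^2 + s^2 = a^2" using a by (simp add: u_def)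
    moreover have "s^2 - 2*r^2 = b^2" using b by (simp add: v_def)
    ultimately show False using no_sol[OF cop r0] by blast
  qed
  have ns1: "-1 \<noteq> z^2" for z :: int
  proof -
    have "0 \<le> z^2" by simp
    then show ?thesis by linarith
  qed
  have ns4: "(u+v)*(u-v) \<noteq> z^2" for z using gen3[where X=w and z=z and e=1] n3w pm3 by simp
  have ns5: "-((u+v)*(u-v)) \<noteq> z^2" for z using gen3[where X=w and z=z and e="-1"] n3w pm3 by simp
  have ns6: "u*v*((u+v)*(u-v)) \<noteq> z^2" for z using gen3[where X="u*v*w" and z=z and e=1] n3uvw unfolding uv3 by simp
  have ns7: "-(u*v*((u+v)*(u-v))) \<noteq> z^2" for z using gen3[where X="u*v*w" and z=z and e="-1"] n3uvw unfolding uv3 by simp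
  show ?thesis
  proof (rule eight_from_uv[OF U V])
    show "u \<noteq> 0" using u0 by simp
    show "v \<noteq> 0" by fact
    show "u + v \<noteq> 0" using upv r2 by simp
    show "u - v \<noteq> 0" using umv w0 by simp
  qed (use ns1 nsA nsB ns4 ns5 ns6 ns7 in auto)
qed

theorem lemma6p2:
  shows "finite {(r :: int, s :: int). coprime r s \<and> r \<noteq> 0 \<and> \<not> eight_distinct_classes r s}"
proof -
  have E: "{(r :: int, s :: int). coprime r s \<and> r \<noteq> 0 \<and> \<not> eight_distinct_classes r s} = {}"
    using main_ok by auto
  show ?thesis unfolding E by simp
qed

end
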